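(* Let $f:\mathcal R\to\mathrm{Nil}_3$ be a conformal minimal immersion which is equivariant, i.e. there are one-parameter groups $\gamma_t\in\mathrm{Aut}(\mathcal R)$ and $\rho_t\in\mathrm{Iso}_\circ(\mathrm{Nil}_3)$, $\rho_t$ not identically the identity, with $f\circ\gamma_t=\rho_t\circ f$ for all $t$. Then $f$ is either a helicoidal surface (its image is invariant under a one-parameter group of helicoidal motions $\rho^{(c,\alpha)}_t$, possibly with pitch $c=0$) or a translation invariant surface (its image is invariant under a one-parameter group of translations $t\mapsto(ta_1,ta_2,tc)\in\mathrm{Nil}_3$ acting by left multiplication).
   Context: $\mathrm{Nil}_3$ denotes $\mathbb R^3$ with the group law $(a_1,a_2,a_3)\cdot(x_1,x_2,x_3)=(a_1+x_1,a_2+x_2,a_3+x_3+\tfrac12(a_1x_2-a_2x_1))$ and the left-invariant metric $dx_1^2+dx_2^2+(dx_3+\tfrac12(x_2dx_1-x_1dx_2))^2$. $\mathrm{Iso}_\circ(\mathrm{Nil}_3)\cong\mathrm{Nil}_3\rtimes\mathrm U_1$, where $(a,e^{i\theta})$ acts by $(a,e^{i\theta}).(x_1,x_2,x_3)=a\cdot(\cos\theta\, x_1-\sin\theta\, x_2,\ \sin\theta\, x_1+\cos\theta\, x_2,\ x_3)$; $a\in\mathrm{Nil}_3$ is identified with $(a,1)$ and $e^{i\theta}$ with $((0,0,0),e^{i\theta})$. A helicoidal motion with pitch $c$ along the axis through $\alpha=(a_1,a_2,0)$ is the one-parameter group $\rho^{(c,\alpha)}_t=\alpha\,(0,0,tc)\,e^{it}\,\alpha^{-1}$.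 *)

theory Defs
  imports "HOL-Analysis.Analysis"
begin

type_synonym R3 = "real^3"

definition nil_mult :: "R3 \<Rightarrow> R3 \<Rightarrow> R3" where
  "nil_mult a x = vector [a$1 + x$1, a$2 + x$2,
                          a$3 + x$3 + (a$1 * x$2 - a$2 * x$1) / 2]"

definition nil_inv :: "R3 \<Rightarrow> R3" where
  "nil_inv a = vector [- a$1, - a$2, - a$3]"

definition rot :: "complex \<Rightarrow> R3 \<Rightarrow> R3" where
  "rot u x = vector [Re u * x$1 - Im u * x$2, Im u * x$1 + Re u * x$2, x$3]"

text \<open>Elements of Iso_0(Nil_3) = Nil_3 semidirect U_1 are pairs (a,u) with norm u = 1.\<close>
type_synonym iso = "R3 \<times> complex"

definition iso_act :: "iso \<Rightarrow> R3 \<Rightarrow> R3" where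
  "iso_act g x = nil_mult (fst g) (rot (snd g) x)"

definition iso_mult :: "iso \<Rightarrow> iso \<Rightarrow> iso" where
  "iso_mult g h = (nil_mult (fst g) (rot (snd g) (fst h)), snd g * snd h)"

definition iso_one :: iso where
  "iso_one = (0, 1)"

definition is_iso :: "iso \<Rightarrow> bool" where
  "is_iso g \<longleftrightarrow> norm (snd g) = 1"

definition iso_one_param :: "(real \<Rightarrow> iso) \<Rightarrow> bool" where
  "iso_one_param \<rho> \<longleftrightarrow> (\<forall>t. is_iso (\<rho> t)) \<and> \<rho> 0 = iso_one \<and>
     (\<forall>s t. \<rho> (s + t) = iso_mult (\<rho> s) (\<rho> t)) \<and> continuous_on UNIV \<rho>"

definition helicoidal :: "real \<Rightarrow> R3 \<Rightarrow> real \<Rightarrow> iso" where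
  "helicoidal c \<alpha> t =
     iso_mult (iso_mult (iso_mult (\<alpha>, 1) (vector [0, 0, t * c], 1)) (0, cis t)) (nil_inv \<alpha>, 1)"

definition nil_metric :: "R3 \<Rightarrow> real^3^3" where
  "nil_metric x = vector [
      vector [1 + (x$2)^2 / 4, - x$1 * x$2 / 4, x$2 / 2],
      vector [- x$1 * x$2 / 4, 1 + (x$1)^2 / 4, - x$1 / 2],
      vector [x$2 / 2, - x$1 / 2, 1]]"

definition nil_inner :: "R3 \<Rightarrow> R3 \<Rightarrow> R3 \<Rightarrow> real" where
  "nil_inner x X Y = X \<bullet> (nil_metric x *v Y)"

definition metric_partial :: "3 \<Rightarrow> 3 \<Rightarrow> 3 \<Rightarrow> R3 \<Rightarrow> real" where
  "metric_partial l i j x = deriv (\<lambda>s. nil_metric (x + s *\<^sub>R axis l 1) $ i $ j) 0"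

definition christoffel :: "3 \<Rightarrow> 3 \<Rightarrow> 3 \<Rightarrow> R3 \<Rightarrow> real" where
  "christoffel k i j x = (\<Sum>l\<in>UNIV. matrix_inv (nil_metric x) $ k $ l *
       (metric_partial i j l x + metric_partial j i l x - metric_partial l i j x)) / 2"

definition christ_quad :: "R3 \<Rightarrow> R3 \<Rightarrow> R3" where
  "christ_quad x X = (\<chi> k. \<Sum>i\<in>UNIV. \<Sum>j\<in>UNIV. christoffel k i j x * X$i * X$j)"

definition d_u :: "(complex \<Rightarrow> R3) \<Rightarrow> complex \<Rightarrow> R3" where
  "d_u F z = frechet_derivative F (at z) 1"

definition d_v :: "(complex \<Rightarrow> R3) \<Rightarrow> complex \<Rightarrow> R3" where
  "d_v F z = frechet_derivative F (at z) \<i>"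

text \<open>F is C^2 on the open set Omega, conformal, immersive, and harmonic as a map
  into Nil_3 (vanishing tension field), which for conformal immersions is minimality.\<close>
definition conformal_minimal_local :: "(complex \<Rightarrow> R3) \<Rightarrow> complex set \<Rightarrow> bool" where
  "conformal_minimal_local F \<Omega> \<longleftrightarrow>
     F differentiable_on \<Omega> \<and> d_u F differentiable_on \<Omega> \<and> d_v F differentiable_on \<Omega> \<and>
     continuous_on \<Omega> (d_u (d_u F)) \<and> continuous_on \<Omega> (d_v (d_u F)) \<and>
     continuous_on \<Omega> (d_u (d_v F)) \<and> continuous_on \<Omega> (d_v (d_v F)) \<and>
     (\<forall>z\<in>\<Omega>.
        (\<forall>a b. a *\<^sub>R d_u F z + b *\<^sub>R d_v F z = 0 \<longrightarrow> a = 0 \<and> b = 0) \<and>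
        nil_inner (F z) (d_u F z) (d_u F z) = nil_inner (F z) (d_v F z) (d_v F z) \<and>
        nil_inner (F z) (d_u F z) (d_v F z) = 0 \<and>
        d_u (d_u F) z + d_v (d_v F) z
          + christ_quad (F z) (d_u F z) + christ_quad (F z) (d_v F z) = 0)"

definition riemann_surface :: "'a topology \<Rightarrow> ('a set \<times> ('a \<Rightarrow> complex)) set \<Rightarrow> bool" where
  "riemann_surface X A \<longleftrightarrow>
     Hausdorff_space X \<and> connected_space X \<and> topspace X \<noteq> {} \<and>
     (\<Union>(U, \<phi>)\<in>A. U) = topspace X \<and>
     (\<forall>(U, \<phi>)\<in>A. openin X U \<and> open (\<phi> ` U) \<and>
        homeomorphic_map (subtopology X U) (top_of_set (\<phi> ` U)) \<phi>) \<and>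
     (\<forall>(U, \<phi>)\<in>A. \<forall>(V, \<psi>)\<in>A. (\<psi> \<circ> inv_into U \<phi>) holomorphic_on (\<phi> ` (U \<inter> V)))"

definition rs_holomorphic :: "'a topology \<Rightarrow> ('a set \<times> ('a \<Rightarrow> complex)) set \<Rightarrow> ('a \<Rightarrow> 'a) \<Rightarrow> bool" where
  "rs_holomorphic X A h \<longleftrightarrow> continuous_map X X h \<and>
     (\<forall>(U, \<phi>)\<in>A. \<forall>(V, \<psi>)\<in>A.
        (\<psi> \<circ> h \<circ> inv_into U \<phi>) holomorphic_on (\<phi> ` (U \<inter> {p \<in> topspace X. h p \<in> V})))"

definition rs_automorphism :: "'a topology \<Rightarrow> ('a set \<times> ('a \<Rightarrow> complex)) set \<Rightarrow> ('a \<Rightarrow> 'a) \<Rightarrow> bool" where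
  "rs_automorphism X A h \<longleftrightarrow> rs_holomorphic X A h \<and>
     (\<exists>g. rs_holomorphic X A g \<and> (\<forall>p\<in>topspace X. g (h p) = p \<and> h (g p) = p))"

definition rs_aut_one_param :: "'a topology \<Rightarrow> ('a set \<times> ('a \<Rightarrow> complex)) set \<Rightarrow> (real \<Rightarrow> 'a \<Rightarrow> 'a) \<Rightarrow> bool" where
  "rs_aut_one_param X A \<gamma> \<longleftrightarrow> (\<forall>t. rs_automorphism X A (\<gamma> t)) \<and>
     (\<forall>p\<in>topspace X. \<gamma> 0 p = p) \<and>
     (\<forall>s t. \<forall>p\<in>topspace X. \<gamma> (s + t) p = \<gamma> s (\<gamma> t p)) \<and>
     continuous_map (prod_topology euclideanreal X) X (\<lambda>(t, p). \<gamma> t p)"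

definition conformal_minimal_immersion ::
  "'a topology \<Rightarrow> ('a set \<times> ('a \<Rightarrow> complex)) set \<Rightarrow> ('a \<Rightarrow> R3) \<Rightarrow> bool" where
  "conformal_minimal_immersion X A f \<longleftrightarrow>
     (\<forall>(U, \<phi>)\<in>A. conformal_minimal_local (f \<circ> inv_into U \<phi>) (\<phi> ` U))"

end

theory Submission
  imports Defs
begin


lemma cauchy_linear:
  fixes G :: "real \<Rightarrow> 'b::real_normed_vector"
  assumes add: "\<And>x y. G (x + y) = G x + G y" and cont: "continuous_on UNIV G"
  shows "G x = x *\<^sub>R G 1"
proof -
  have G0: "G 0 = 0" using add[of 0 0] by simp
  have Gneg: "G (- y) = - G y" for y using add[of y "-y"] G0 by (simp add: eq_neg_iff_add_eq_0 add.commute)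
  have Gnat: "G (of_nat n * y) = of_nat n *\<^sub>R G y" for n y
    by (induction n) (simp_all add: G0 add distrib_right scaleR_add_left)
  have Gint: "G (of_int m * y) = of_int m *\<^sub>R G y" for m y
  proof (cases "m \<ge> 0")
    case True then show ?thesis using Gnat[of "nat m" y] by simp
  next
    case False
    then have "of_int m * y = - (of_nat (nat (-m)) * y)" by simp
    then show ?thesis using Gnat[of "nat (-m)" y] Gneg False by simp
  qed
  have Q: "G q = q *\<^sub>R G 1" if qR: "q \<in> \<rat>" for q
  proof -
    obtain a b :: int where b: "b > 0" and q: "q = of_int a / of_int b"
      using Rats_cases'[OF qR] by blast
    have "of_int b *\<^sub>R G q = G (of_int b * q)" by (rule Gint[symmetric])
    also have "of_int b * q = of_int a * 1" using b q by simp
    also have "G (of_int a * 1) = of_int a *\<^sub>R G 1" by (rule Gint)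
    finally have "of_int b *\<^sub>R G q = of_int a *\<^sub>R G 1" .
    then have e: "inverse (real_of_int b) *\<^sub>R (of_int b *\<^sub>R G q) = inverse (real_of_int b) *\<^sub>R (of_int a *\<^sub>R G 1)"
      by simp
    have "G q = inverse (real_of_int b) *\<^sub>R (of_int b *\<^sub>R G q)" using b by simp
    also have "\<dots> = (of_int a / of_int b) *\<^sub>R G 1" using e by (simp add: divide_inverse mult.commute)
    finally have "G q = (of_int a / of_int b) *\<^sub>R G 1" .
    then show ?thesis using q by simp
  qed
  have cl: "closed {y \<in> UNIV. G y - y *\<^sub>R G 1 = 0}"
    by (rule continuous_closed_preimage_constant) (auto intro!: continuous_intros cont)
  have "\<rat> \<subseteq> {y \<in> UNIV. G y - y *\<^sub>R G 1 = 0}"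
  proof
    fix y :: real assume yR: "y \<in> \<rat>"
    have "G y = y *\<^sub>R G 1" by (rule Q[OF yR])
    then show "y \<in> {y \<in> UNIV. G y - y *\<^sub>R G 1 = 0}" by simp
  qed
  then have "closure \<rat> \<subseteq> {y \<in> UNIV. G y - y *\<^sub>R G 1 = 0}" using cl closure_minimal by blast
  then have "x \<in> {y \<in> UNIV. G y - y *\<^sub>R G 1 = 0}" using Rats_closure_real by blast
  then show ?thesis by simp
qed

lemma circle_hom:
  fixes u :: "real \<Rightarrow> complex"
  assumes nu: "\<And>t. norm (u t) = 1" and u0: "u 0 = 1" and hom: "\<And>s t. u (s + t) = u s * u t"
    and cont: "continuous_on UNIV u"
  shows "\<exists>\<omega>. \<forall>t. u t = cis (\<omega> * t)"
proof -
  have nz: "u t \<noteq> 0" for t using nu[of t] by auto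
  obtain g where gc: "continuous_on UNIV g" and ge0: "\<And>x. x \<in> UNIV \<Longrightarrow> u x = exp (g x)"
    using continuous_logarithm_on_contractible[OF cont convex_imp_contractible[OF convex_UNIV]] nz
    by blast
  have ge: "u x = exp (g x)" for x using ge0 by simp
  have hconst: "g (s + t) - g s - g t = - g 0" for s t
  proof -
    define h where "h = (\<lambda>t. g (s + t) - g s - g t)"
    have eh: "exp (h t) = 1" for t
      using hom[of s t] nz[of s] nz[of t] by (simp add: h_def exp_diff ge)
    have "h constant_on UNIV"
    proof (rule continuous_discrete_range_constant)
      show "connected (UNIV :: real set)" by simp
      show "continuous_on UNIV h" unfolding h_def
        by (intro continuous_intros continuous_on_compose2[OF gc]) auto
      fix x :: real
      show "\<exists>e>0. \<forall>y. y \<in> UNIV \<and> h y \<noteq> h x \<longrightarrow> e \<le> norm (h y - h x)"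
      proof (intro exI[of _ "2*pi"] conjI allI impI)
        fix y assume "y \<in> UNIV \<and> h y \<noteq> h x"
        then have ne: "h y \<noteq> h x" by simp
        show "2 * pi \<le> norm (h y - h x)"
        proof (rule ccontr)
          assume "\<not> ?thesis"
          then have "\<bar>Im (h y) - Im (h x)\<bar> < 2 * pi"
            by (smt (verit) abs_Im_le_cmod minus_complex.simps(2))
          then have "h y = h x" by (rule exp_complex_eqI) (simp add: eh)
          with ne show False by simp
        qed
      qed simp
    qed
    then have "h t = h 0" unfolding constant_on_def by (metis UNIV_I)
    then show ?thesis by (simp add: h_def)
  qed
  define G where "G = (\<lambda>t. g t - g 0)"
  have Gadd: "G (x + y) = G x + G y" for x y
    using hconst[of x y] by (simp add: G_def algebra_simps)
  have Gc: "continuous_on UNIV G" unfolding G_def by (intro continuous_intros gc)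
  have Glin: "G t = t *\<^sub>R G 1" for t by (rule cauchy_linear[OF Gadd Gc])
  have eg0: "exp (g 0) = 1" using u0 ge by simp
  have ut: "u t = exp (t *\<^sub>R G 1)" for t
  proof -
    have "u t = exp (G t + g 0)" by (simp add: ge G_def)
    also have "\<dots> = exp (t *\<^sub>R G 1)" by (simp add: exp_add eg0 Glin[of t])
    finally show ?thesis .
  qed
  have "norm (exp (G 1)) = 1" using nu[of 1] ut[of 1] by simp
  then have "Re (G 1) = 0" by simp
  then have e: "t *\<^sub>R G 1 = \<i> * of_real (Im (G 1) * t)" for t by (simp add: complex_eq_iff)
  have "u t = cis (Im (G 1) * t)" for t
    using ut[of t] by (simp only: e cis_conv_exp)
  then show ?thesis by blast
qed



lemma vec3_eqI: "(x::real^3)$1 = y$1 \<Longrightarrow> x$2 = y$2 \<Longrightarrow> x$3 = y$3 \<Longrightarrow> x = y"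
  by (simp add: vec_eq_iff forall_3)

lemma nil_mult_c:
  "nil_mult a x $ 1 = a$1 + x$1" "nil_mult a x $ 2 = a$2 + x$2"
  "nil_mult a x $ 3 = a$3 + x$3 + (a$1 * x$2 - a$2 * x$1) / 2"
  by (simp_all add: nil_mult_def)

lemma rot_c:
  "rot u x $ 1 = Re u * x$1 - Im u * x$2" "rot u x $ 2 = Im u * x$1 + Re u * x$2"
  "rot u x $ 3 = x$3"
  by (simp_all add: rot_def)

lemma helicoidal_c:
  "fst (helicoidal c (vector [b1, b2, 0]) t) $ 1 = b1 - (cos t * b1 - sin t * b2)"
  "fst (helicoidal c (vector [b1, b2, 0]) t) $ 2 = b2 - (sin t * b1 + cos t * b2)"
  "fst (helicoidal c (vector [b1, b2, 0]) t) $ 3 = t * c - sin t * (b1^2 + b2^2) / 2"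
  "snd (helicoidal c (vector [b1, b2, 0]) t) = cis t"
  by (simp_all add: helicoidal_def iso_mult_def nil_mult_c rot_c nil_inv_def power2_eq_square
      algebra_simps diff_divide_distrib add_divide_distrib)

lemma gadd_alg:
  fixes s t \<beta>1 \<beta>2 bs bt bst :: real
  assumes e: "bst = bs + bt + ((\<beta>1 - (cos s * \<beta>1 - sin s * \<beta>2)) * (sin s * (\<beta>1 - (cos t * \<beta>1 - sin t * \<beta>2)) + cos s * (\<beta>2 - (sin t * \<beta>1 + cos t * \<beta>2)))
             - (\<beta>2 - (sin s * \<beta>1 + cos s * \<beta>2)) * (cos s * (\<beta>1 - (cos t * \<beta>1 - sin t * \<beta>2)) - sin s * (\<beta>2 - (sin t * \<beta>1 + cos t * \<beta>2)))) / 2"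
  shows "bst + sin (s + t) * (\<beta>1^2 + \<beta>2^2) / 2 = (bs + sin s * (\<beta>1^2 + \<beta>2^2) / 2) + (bt + sin t * (\<beta>1^2 + \<beta>2^2) / 2)"
proof -
  have ss: "sin s ^ 2 + cos s ^ 2 = 1" "sin t ^ 2 + cos t ^ 2 = 1" by simp_all
  show ?thesis unfolding sin_add using ss e by algebra
qed

lemma one_param_classify:
  assumes rho: "iso_one_param \<rho>" and nt: "\<exists>t. \<rho> t \<noteq> iso_one"
  shows "(\<exists>c b1 b2 \<omega>. \<omega> \<noteq> 0 \<and> (\<forall>t. helicoidal c (vector [b1, b2, 0]) t = \<rho> (t / \<omega>)))
     \<or> (\<exists>a1 a2 c. (a1, a2, c) \<noteq> (0, 0, 0) \<and> (\<forall>t. \<rho> t = (vector [t * a1, t * a2, t * c], 1)))"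
proof -
  define a where "a = (\<lambda>t. fst (\<rho> t))"
  define u where "u = (\<lambda>t. snd (\<rho> t))"
  have rho_eq: "\<rho> t = (a t, u t)" for t by (simp add: a_def u_def)
  have nu: "norm (u t) = 1" for t using rho by (simp add: iso_one_param_def is_iso_def u_def)
  have a0: "a 0 = 0" and u0: "u 0 = 1" using rho by (simp_all add: iso_one_param_def iso_one_def a_def u_def)
  have hom: "a (s + t) = nil_mult (a s) (rot (u s) (a t))" "u (s + t) = u s * u t" for s t
    using rho by (simp_all add: iso_one_param_def iso_mult_def a_def u_def)
  have ac: "continuous_on UNIV a" and uc: "continuous_on UNIV u"
    using rho unfolding iso_one_param_def a_def u_def
    by (auto intro: continuous_on_fst continuous_on_snd)
  obtain \<omega> where uw: "\<And>t. u t = cis (\<omega> * t)"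
    using circle_hom[OF nu u0 hom(2) uc] by blast
  have H1: "a (s + t) $ 1 = a s $ 1 + cos (\<omega> * s) * a t $ 1 - sin (\<omega> * s) * a t $ 2" for s t
    using hom(1)[of s t] by (simp add: nil_mult_c rot_c uw)
  have H2: "a (s + t) $ 2 = a s $ 2 + sin (\<omega> * s) * a t $ 1 + cos (\<omega> * s) * a t $ 2" for s t
    using hom(1)[of s t] by (simp add: nil_mult_c rot_c uw)
  have H3: "a (s + t) $ 3 = a s $ 3 + a t $ 3 + (a s $ 1 * (sin (\<omega> * s) * a t $ 1 + cos (\<omega> * s) * a t $ 2)
             - a s $ 2 * (cos (\<omega> * s) * a t $ 1 - sin (\<omega> * s) * a t $ 2)) / 2" for s t
    using hom(1)[of s t] by (simp add: nil_mult_c rot_c uw)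
  have cc: "continuous_on UNIV (\<lambda>t. a t $ i)" for i by (intro continuous_intros ac)
  show ?thesis
  proof (cases "\<omega> = 0")
    case True
    have l1: "a t $ 1 = t * a 1 $ 1" for t
    proof -
      have "a (x + y) $ 1 = a x $ 1 + a y $ 1" for x y using H1[of x y] True by simp
      from cauchy_linear[of "\<lambda>t. a t $ 1", OF this cc, of t] show ?thesis by simp
    qed
    have l2: "a t $ 2 = t * a 1 $ 2" for t
    proof -
      have "a (x + y) $ 2 = a x $ 2 + a y $ 2" for x y using H2[of x y] True by simp
      from cauchy_linear[of "\<lambda>t. a t $ 2", OF this cc, of t] show ?thesis by simp
    qed
    have l3: "a t $ 3 = t * a 1 $ 3" for t
    proof -
      have "a (x + y) $ 3 = a x $ 3 + a y $ 3" for x y using H3[of x y] True by (simp add: l1[of x] l2[of x] l1[of y] l2[of y])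
      from cauchy_linear[of "\<lambda>t. a t $ 3", OF this cc, of t] show ?thesis by simp
    qed
    have r: "\<rho> t = (vector [t * a 1 $ 1, t * a 1 $ 2, t * a 1 $ 3], 1)" for t
    proof -
      have e1: "a t = vector [t * a 1 $ 1, t * a 1 $ 2, t * a 1 $ 3]"
        by (rule vec3_eqI) (simp_all only: vector_3 l1[of t] l2[of t] l3[of t])
      have e2: "u t = 1" using uw[of t] True by simp
      show ?thesis unfolding rho_eq e1 e2 ..
    qed
    have nz: "(a 1 $ 1, a 1 $ 2, a 1 $ 3) \<noteq> (0, 0, 0)"
    proof
      assume z: "(a 1 $ 1, a 1 $ 2, a 1 $ 3) = (0, 0, 0)"
      have "\<rho> t = iso_one" for t using z
        by (simp add: r iso_one_def, intro vec3_eqI) simp_all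
      with nt show False by blast
    qed
    show ?thesis
    proof (rule disjI2, intro exI conjI allI)
      show "(a 1 $ 1, a 1 $ 2, a 1 $ 3) \<noteq> (0, 0, 0)" by (rule nz)
      fix t show "\<rho> t = (vector [t * a 1 $ 1, t * a 1 $ 2, t * a 1 $ 3], 1)" by (rule r)
    qed
  next
    case False
    define b where "b = (\<lambda>t. a (t / \<omega>))"
    have bs: "(s + t) / \<omega> = s / \<omega> + t / \<omega>" for s t by (simp add: add_divide_distrib)
    have B1: "b (s + t) $ 1 = b s $ 1 + cos s * b t $ 1 - sin s * b t $ 2" for s t
      using H1[of "s/\<omega>" "t/\<omega>"] False by (simp add: b_def bs)
    have B2: "b (s + t) $ 2 = b s $ 2 + sin s * b t $ 1 + cos s * b t $ 2" for s t
      using H2[of "s/\<omega>" "t/\<omega>"] False by (simp add: b_def bs)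
    have B3: "b (s + t) $ 3 = b s $ 3 + b t $ 3 + (b s $ 1 * (sin s * b t $ 1 + cos s * b t $ 2)
             - b s $ 2 * (cos s * b t $ 1 - sin s * b t $ 2)) / 2" for s t
      using H3[of "s/\<omega>" "t/\<omega>"] False by (simp add: b_def bs)
    define \<beta>1 where "\<beta>1 = b pi $ 1 / 2"
    define \<beta>2 where "\<beta>2 = b pi $ 2 / 2"
    have b1: "b s $ 1 = \<beta>1 - (cos s * \<beta>1 - sin s * \<beta>2)" for s
      using B1[of s pi] B1[of pi s] by (simp add: \<beta>1_def \<beta>2_def add.commute algebra_simps)
    have b2: "b s $ 2 = \<beta>2 - (sin s * \<beta>1 + cos s * \<beta>2)" for s
      using B2[of s pi] B2[of pi s] by (simp add: \<beta>1_def \<beta>2_def add.commute algebra_simps)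
    define g where "g = (\<lambda>t. b t $ 3 + sin t * (\<beta>1^2 + \<beta>2^2) / 2)"
    have gadd: "g (s + t) = g s + g t" for s t
    proof -
      have e: "b (s + t) $ 3 = b s $ 3 + b t $ 3 + ((\<beta>1 - (cos s * \<beta>1 - sin s * \<beta>2)) * (sin s * (\<beta>1 - (cos t * \<beta>1 - sin t * \<beta>2)) + cos s * (\<beta>2 - (sin t * \<beta>1 + cos t * \<beta>2)))
             - (\<beta>2 - (sin s * \<beta>1 + cos s * \<beta>2)) * (cos s * (\<beta>1 - (cos t * \<beta>1 - sin t * \<beta>2)) - sin s * (\<beta>2 - (sin t * \<beta>1 + cos t * \<beta>2)))) / 2"
        using B3[of s t] by (simp only: b1 b2)
      show ?thesis unfolding g_def by (rule gadd_alg[OF e])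
    qed
    have "continuous_on UNIV (\<lambda>t. b t $ 3)" unfolding b_def
      by (rule continuous_on_compose2[OF cc[of 3]]) (use False in \<open>auto intro!: continuous_intros\<close>)
    then have gc: "continuous_on UNIV g" unfolding g_def
      by (rule continuous_on_add) (auto intro!: continuous_intros)
    have gl: "g t = t * g 1" for t using cauchy_linear[of g, OF gadd gc, of t] by simp
    have hel: "helicoidal (g 1) (vector [\<beta>1, \<beta>2, 0]) t = \<rho> (t / \<omega>)" for t
    proof (rule prod_eqI)
      show "fst (helicoidal (g 1) (vector [\<beta>1, \<beta>2, 0]) t) = fst (\<rho> (t / \<omega>))"
      proof (rule vec3_eqI)
        show "fst (helicoidal (g 1) (vector [\<beta>1, \<beta>2, 0]) t) $ 3 = fst (\<rho> (t / \<omega>)) $ 3"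
          using gl[of t] by (simp add: helicoidal_c g_def b_def a_def mult.commute)
      qed (simp_all add: helicoidal_c b1[of t, unfolded b_def a_def] b2[of t, unfolded b_def a_def])
      show "snd (helicoidal (g 1) (vector [\<beta>1, \<beta>2, 0]) t) = snd (\<rho> (t / \<omega>))"
        using False uw[of "t / \<omega>"] by (simp add: helicoidal_c u_def)
    qed
    show ?thesis
    proof (rule disjI1, intro exI conjI allI)
      show "\<omega> \<noteq> 0" by (rule False)
      fix t show "helicoidal (g 1) (vector [\<beta>1, \<beta>2, 0]) t = \<rho> (t / \<omega>)" by (rule hel)
    qed
  qed
qed

theorem mainTheorem4:
  fixes X :: "'a topology" and A :: "('a set \<times> ('a \<Rightarrow> complex)) set"
    and f :: "'a \<Rightarrow> real^3" and \<gamma> :: "real \<Rightarrow> 'a \<Rightarrow> 'a" and \<rho> :: "real \<Rightarrow> (real^3) \<times> complex"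
  assumes "riemann_surface X A"
    and "conformal_minimal_immersion X A f"
    and "rs_aut_one_param X A \<gamma>"
    and "iso_one_param \<rho>"
    and "\<exists>t. \<rho> t \<noteq> iso_one"
    and "\<forall>t. \<forall>p\<in>topspace X. f (\<gamma> t p) = iso_act (\<rho> t) (f p)"
  shows "(\<exists>c a1 a2. \<forall>t. \<forall>p\<in>topspace X.
            iso_act (helicoidal c (vector [a1, a2, 0]) t) (f p) \<in> f ` topspace X)
       \<or> (\<exists>a1 a2 c. (a1, a2, c) \<noteq> (0, 0, 0) \<and> (\<forall>t. \<forall>p\<in>topspace X.
            nil_mult (vector [t * a1, t * a2, t * c]) (f p) \<in> f ` topspace X))"
proof -
  have gam: "\<gamma> t p \<in> topspace X" if "p \<in> topspace X" for t p
  proof -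
    have "rs_automorphism X A (\<gamma> t)" using assms(3) by (simp add: rs_aut_one_param_def)
    then have "rs_holomorphic X A (\<gamma> t)" by (simp add: rs_automorphism_def)
    then have "continuous_map X X (\<gamma> t)" by (simp add: rs_holomorphic_def)
    then have "\<gamma> t ` topspace X \<subseteq> topspace X" by (rule continuous_map_image_subset_topspace)
    then show ?thesis using that by blast
  qed
  have inv: "iso_act (\<rho> t) (f p) \<in> f ` topspace X" if "p \<in> topspace X" for t p
  proof -
    have e: "f (\<gamma> t p) = iso_act (\<rho> t) (f p)" using assms(6) that by simp
    show ?thesis by (rule rev_image_eqI[OF gam[OF that]]) (rule e[symmetric])
  qed
  have rot1: "rot 1 x = x" for x by (rule vec3_eqI) (simp_all add: rot_c)
  from one_param_classify[OF assms(4,5)] show ?thesis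
  proof (elim disjE exE conjE)
    fix c b1 b2 \<omega>
    assume h: "\<forall>t. helicoidal c (vector [b1, b2, 0]) t = \<rho> (t / \<omega>)"
    have Hh: "\<forall>t. \<forall>p\<in>topspace X. iso_act (helicoidal c (vector [b1, b2, 0]) t) (f p) \<in> f ` topspace X"
    proof (intro allI ballI)
      fix t p assume p: "p \<in> topspace X"
      have "helicoidal c (vector [b1, b2, 0]) t = \<rho> (t / \<omega>)" using h by (rule spec)
      then show "iso_act (helicoidal c (vector [b1, b2, 0]) t) (f p) \<in> f ` topspace X"
        using inv[OF p, of "t / \<omega>"] by (rule ssubst)
    qed
    show ?thesis by (rule disjI1, rule exI[of _ c], rule exI[of _ b1], rule exI[of _ b2], rule Hh)
  next
    fix a1 a2 c
    assume nz: "(a1, a2, c) \<noteq> (0, 0, 0)" and r: "\<forall>t. \<rho> t = (vector [t * a1, t * a2, t * c], 1)"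
    have T: "\<forall>t. \<forall>p\<in>topspace X. nil_mult (vector [t * a1, t * a2, t * c]) (f p) \<in> f ` topspace X"
    proof (intro allI ballI)
      fix t p assume p: "p \<in> topspace X"
      have rt: "\<rho> t = (vector [t * a1, t * a2, t * c], 1)" using r by (rule spec)
      have "iso_act (\<rho> t) (f p) = nil_mult (vector [t * a1, t * a2, t * c]) (f p)"
        unfolding rt iso_act_def by (simp only: fst_conv snd_conv rot1)
      then show "nil_mult (vector [t * a1, t * a2, t * c]) (f p) \<in> f ` topspace X"
        using inv[OF p, of t] by simp
    qed
    show ?thesis
    proof (rule disjI2, intro exI conjI)
      show "(a1, a2, c) \<noteq> (0, 0, 0)" by (rule nz)
      show "\<forall>t. \<forall>p\<in>topspace X. nil_mult (vector [t * a1, t * a2, t * c]) (f p) \<in> f ` topspace X" by (rule T)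
    qed
  qed
qed

end
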